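(* Let $D$ be an $n\times n$ distance matrix and let $\mathbf X$ be a truth assignment of the variables $\{x_{i,a}: i\in[n],\ a\in\{n+1,n+2\}\}$ satisfying $\phi_2'$. Then $D'(\phi_2',\mathbf X)=D^{(3)}$.
   Context: $[n]=\{1,\dots,n\}$. An $n\times n$ matrix $D$ with non-negative integer entries is a distance matrix if (i) $D_{ii}=0$ for all $i$ and $D_{ij}>0$ for all $i\ne j$; (ii) $D$ is symmetric; (iii) $D_{iw}+D_{wj}\ge D_{ij}$ for all $i,j,w\in[n]$. The associated graph $G_D=(V_D,E_D)$ of $D$ is the simple unweighted graph with $V_D=\{v_1,\dots,v_n\}$ and $\{v_i,v_j\}\in E_D$ if and only if $D_{ij}=1$; $d_{G_D}$ is its shortest-path distance ($\infty$ if no path). For $q\in\mathbb N$, the $q$-skeleton $G^q$ of $D$ is the edge-weighted graph with vertex set $[n]$ having an edge $\{i,j\}$ ($i<j$) if and only if $D_{ij}\le q$, this edge having weight (length) $D_{ij}$; $D^{(q)}$ denotes the $n\times n$ matrix whose $(i,j)$ entry is the weighted shortest-path distance between $i$ and $j$ in $G^q$ ($\infty$ if no path exists). The Boolean formula $\phi_2'$ over variables $x_{i,a}$ ($i\in[n]$, $a\in\{n+1,n+2\}$; meaning "$v_i$ is adjacent to the new vertex $v_a$") is the conjunction (written as an equivalent 2-CNF formula) of the following constraints: (1) for all $i,j\in[n]$ with $D_{ij}>2$: $(\neg x_{i,n+1}\vee\neg x_{j,n+1})$ and $(\neg x_{i,n+2}\vee\neg x_{j,n+2})$; (2) for all $i,j\in[n]$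 with $D_{ij}=2$ and $d_{G_D}(v_i,v_j)>2$: $(x_{i,n+1}\wedge x_{j,n+1})\vee(x_{i,n+2}\wedge x_{j,n+2})$; (3) for all $i,j\in[n]$ with $D_{ij}>3$: $(\neg x_{i,n+1}\vee\neg x_{j,n+2})$ and $(\neg x_{i,n+2}\vee\neg x_{j,n+1})$; (4) for all $i,j\in[n]$ with $D_{ij}=3$ and $D^{(2)}_{ij}>3$: $(x_{i,n+1}\wedge x_{j,n+2})\vee(x_{i,n+2}\wedge x_{j,n+1})$. For a satisfying assignment $\mathbf X$, $G'_{\phi_2',\mathbf X}$ is the simple graph on $\{v_1,\dots,v_{n+2}\}$ whose induced subgraph on $\{v_1,\dots,v_n\}$ is $G_D$, in which $v_{n+1}$ and $v_{n+2}$ are adjacent, and in which $v_a$ ($a\in\{n+1,n+2\}$) is adjacent to $v_i$ ($i\in[n]$) exactly when $x_{i,a}$ is true in $\mathbf X$. $D'(\phi_2',\mathbf X)$ is the $n\times n$ matrix of shortest-path distances in $G'_{\phi_2',\mathbf X}$ between $v_i$ and $v_j$, $i,j\in[n]$ ($\infty$ if no path). *)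

theory Defs
  imports Main "HOL-Library.Extended_Nat"
begin

text \<open>Vertices are natural numbers; the original vertices are 1..n, the new
  vertices are n+1 and n+2. Distances take values in enat (\<infinity> = no path).\<close>

definition is_distance_matrix :: "nat \<Rightarrow> (nat \<Rightarrow> nat \<Rightarrow> nat) \<Rightarrow> bool" where
  "is_distance_matrix n D \<longleftrightarrow>
     (\<forall>i\<in>{1..n}. D i i = 0) \<and>
     (\<forall>i\<in>{1..n}. \<forall>j\<in>{1..n}. i \<noteq> j \<longrightarrow> D i j > 0) \<and>
     (\<forall>i\<in>{1..n}. \<forall>j\<in>{1..n}. D i j = D j i) \<and>
     (\<forall>i\<in>{1..n}. \<forall>j\<in>{1..n}. \<forall>w\<in>{1..n}. D i w + D w j \<ge> D i j)"

text \<open>Walks from i to j in the graph (V, E) and weighted shortest-path distance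
  (weights w on edges); INF over the empty set is \<infinity>.\<close>

definition walks :: "nat set \<Rightarrow> (nat \<Rightarrow> nat \<Rightarrow> bool) \<Rightarrow> nat \<Rightarrow> nat \<Rightarrow> nat list set" where
  "walks V E i j = {p. p \<noteq> [] \<and> hd p = i \<and> last p = j \<and> set p \<subseteq> V \<and>
                        (\<forall>k < length p - 1. E (p ! k) (p ! (k + 1)))}"

definition wdist :: "nat set \<Rightarrow> (nat \<Rightarrow> nat \<Rightarrow> bool) \<Rightarrow> (nat \<Rightarrow> nat \<Rightarrow> nat) \<Rightarrow> nat \<Rightarrow> nat \<Rightarrow> enat" where
  "wdist V E w i j = (INF p \<in> walks V E i j. enat (\<Sum>k < length p - 1. w (p ! k) (p ! (k + 1))))"

definition dG :: "nat \<Rightarrow> (nat \<Rightarrow> nat \<Rightarrow> nat) \<Rightarrow> nat \<Rightarrow> nat \<Rightarrow> enat" where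
  "dG n D i j = wdist {1..n} (\<lambda>a b. D a b = 1) (\<lambda>_ _. 1) i j"

definition skel_dist :: "nat \<Rightarrow> (nat \<Rightarrow> nat \<Rightarrow> nat) \<Rightarrow> nat \<Rightarrow> nat \<Rightarrow> nat \<Rightarrow> enat" where
  "skel_dist n D q i j = wdist {1..n} (\<lambda>a b. a \<noteq> b \<and> D a b \<le> q) D i j"

definition sat_phi2' :: "nat \<Rightarrow> (nat \<Rightarrow> nat \<Rightarrow> nat) \<Rightarrow> (nat \<Rightarrow> nat \<Rightarrow> bool) \<Rightarrow> bool" where
  "sat_phi2' n D X \<longleftrightarrow>
    (\<forall>i\<in>{1..n}. \<forall>j\<in>{1..n}.
      (D i j > 2 \<longrightarrow> (\<not> X i (n+1) \<or> \<not> X j (n+1)) \<and> (\<not> X i (n+2) \<or> \<not> X j (n+2))) \<and>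
      (D i j = 2 \<and> dG n D i j > 2 \<longrightarrow> (X i (n+1) \<and> X j (n+1)) \<or> (X i (n+2) \<and> X j (n+2))) \<and>
      (D i j > 3 \<longrightarrow> (\<not> X i (n+1) \<or> \<not> X j (n+2)) \<and> (\<not> X i (n+2) \<or> \<not> X j (n+1))) \<and>
      (D i j = 3 \<and> skel_dist n D 2 i j > 3 \<longrightarrow> (X i (n+1) \<and> X j (n+2)) \<or> (X i (n+2) \<and> X j (n+1))))"

definition ext_edge :: "nat \<Rightarrow> (nat \<Rightarrow> nat \<Rightarrow> nat) \<Rightarrow> (nat \<Rightarrow> nat \<Rightarrow> bool) \<Rightarrow> nat \<Rightarrow> nat \<Rightarrow> bool" where
  "ext_edge n D X u v \<longleftrightarrow>
     (u \<in> {1..n} \<and> v \<in> {1..n} \<and> D u v = 1) \<or>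
     (u = n+1 \<and> v = n+2) \<or> (u = n+2 \<and> v = n+1) \<or>
     (u \<in> {1..n} \<and> v \<in> {n+1, n+2} \<and> X u v) \<or>
     (v \<in> {1..n} \<and> u \<in> {n+1, n+2} \<and> X v u)"

definition ext_dist :: "nat \<Rightarrow> (nat \<Rightarrow> nat \<Rightarrow> nat) \<Rightarrow> (nat \<Rightarrow> nat \<Rightarrow> bool) \<Rightarrow> nat \<Rightarrow> nat \<Rightarrow> enat" where
  "ext_dist n D X i j = wdist {1..n+2} (ext_edge n D X) (\<lambda>_ _. 1) i j"

end

theory Submission
  imports Defs
begin

fun iw :: "(nat \<Rightarrow> nat \<Rightarrow> bool) \<Rightarrow> nat list \<Rightarrow> bool" where
  "iw E [] = False"
| "iw E [x] = True"
| "iw E (x#y#r) = (E x y \<and> iw E (y#r))"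

fun cst :: "(nat \<Rightarrow> nat \<Rightarrow> nat) \<Rightarrow> nat list \<Rightarrow> nat" where
  "cst w (x#y#r) = w x y + cst w (y#r)"
| "cst w _ = 0"

definition W :: "nat set \<Rightarrow> (nat \<Rightarrow> nat \<Rightarrow> bool) \<Rightarrow> nat \<Rightarrow> nat \<Rightarrow> nat list set" where
  "W V E i j = {p. hd p = i \<and> last p = j \<and> set p \<subseteq> V \<and> iw E p}"

lemma iw_char: "iw E p \<longleftrightarrow> p \<noteq> [] \<and> (\<forall>k<length p - 1. E (p!k) (p!(k+1)))"
  by (induction E p rule: iw.induct) (auto simp: All_less_Suc2)

lemma cst_sum: "(\<Sum>k<length p - 1. w (p!k) (p!(k+1))) = cst w p"
  by (induction w p rule: cst.induct) (auto simp del: sum.lessThan_Suc simp add: sum.lessThan_Suc_shift)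

lemma walks_eq: "walks V E i j = W V E i j"
  unfolding walks_def W_def using iw_char by blast

lemma wdist_alt: "wdist V E w i j = (INF p\<in>W V E i j. enat (cst w p))"
  unfolding wdist_def walks_eq cst_sum ..

lemma wd_le: "p \<in> W V E i j \<Longrightarrow> wdist V E w i j \<le> enat (cst w p)"
  unfolding wdist_alt by (rule INF_lower)

lemma wd_ex: assumes "wdist V E w i j \<le> enat k" shows "\<exists>p\<in>W V E i j. cst w p \<le> k"
proof (rule ccontr)
  assume "\<not> ?thesis"
  hence "\<forall>p\<in>W V E i j. enat (Suc k) \<le> enat (cst w p)" by auto
  hence "enat (Suc k) \<le> wdist V E w i j" unfolding wdist_alt by (meson INF_greatest)
  hence "enat (Suc k) \<le> enat k" using assms by (rule order_trans)
  then show False by simp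
qed

lemma iw_ne: "iw E p \<Longrightarrow> p \<noteq> []" by (cases p) auto

lemma app: "iw E p \<Longrightarrow> iw E q \<Longrightarrow> last p = hd q \<Longrightarrow>
   iw E (p @ tl q) \<and> cst w (p @ tl q) = cst w p + cst w q"
proof (induction E p rule: iw.induct)
  case (2 E x)
  then show ?case by (cases q) auto
next
  case (3 E x y r)
  then show ?case by auto
qed auto

lemma appW: assumes "p \<in> W V E i j" "q \<in> W V E j k"
  shows "p @ tl q \<in> W V E i k \<and> cst w (p @ tl q) = cst w p + cst w q"
proof -
  have ne: "p \<noteq> []" "q \<noteq> []" using assms iw_ne unfolding W_def by auto
  have "set (tl q) \<subseteq> set q" by (cases q) auto
  moreover have "last (p @ tl q) = last q"
    using ne assms unfolding W_def by (cases q) (auto split: if_splits)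
  ultimately show ?thesis using app[of E p q w] assms ne unfolding W_def by auto
qed

lemma transfer:
  assumes "V1 \<subseteq> V2"
    and edge: "\<And>u v. u\<in>V1 \<Longrightarrow> v\<in>V1 \<Longrightarrow> E1 u v \<Longrightarrow> \<exists>q\<in>W V2 E2 u v. cst w2 q \<le> w1 u v"
  shows "p \<in> W V1 E1 i j \<Longrightarrow> \<exists>q\<in>W V2 E2 i j. cst w2 q \<le> cst w1 p"
proof (induction p arbitrary: i)
  case Nil then show ?case by (simp add: W_def)
next
  case (Cons x p)
  show ?case
  proof (cases p)
    case Nil
    then show ?thesis using Cons.prems assms(1) by (intro bexI[of _ "[x]"]) (auto simp: W_def)
  next
    case (Cons y r)
    have p1: "p \<in> W V1 E1 y j" "x \<in> V1" "y \<in> V1" "E1 x y" "i = x"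
      using Cons.prems Cons by (auto simp: W_def)
    obtain q2 where q2: "q2 \<in> W V2 E2 y j" "cst w2 q2 \<le> cst w1 p" using Cons.IH p1 by blast
    obtain q1 where q1: "q1 \<in> W V2 E2 x y" "cst w2 q1 \<le> w1 x y" using edge p1 by blast
    show ?thesis using appW[OF q1(1) q2(1), of w2] q1 q2 p1 Cons by (intro bexI[of _ "q1 @ tl q2"]) auto
  qed
qed


lemma W_single: "i \<in> V \<Longrightarrow> [i] \<in> W V E i i" by (simp add: W_def)

context
  fixes n :: nat and D :: "nat \<Rightarrow> nat \<Rightarrow> nat" and X :: "nat \<Rightarrow> nat \<Rightarrow> bool"
  assumes dm: "is_distance_matrix n D"
    and sat: "sat_phi2' n D X"
begin

lemma D0: "i \<in> {1..n} \<Longrightarrow> D i i = 0" using dm unfolding is_distance_matrix_def by blast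
lemma Dpos: "i \<in> {1..n} \<Longrightarrow> j \<in> {1..n} \<Longrightarrow> i \<noteq> j \<Longrightarrow> D i j > 0"
  using dm unfolding is_distance_matrix_def by blast

lemma S1: assumes "i \<in> {1..n}" "j \<in> {1..n}" "a \<in> {n+1,n+2}" "X i a" "X j a" shows "D i j \<le> 2"
proof -
  have "D i j > 2 \<longrightarrow> (\<not> X i (n+1) \<or> \<not> X j (n+1)) \<and> (\<not> X i (n+2) \<or> \<not> X j (n+2))"
    using sat assms(1,2) unfolding sat_phi2'_def by blast
  then show ?thesis using assms(3-5) by auto
qed

lemma S3: "i \<in> {1..n} \<Longrightarrow> j \<in> {1..n} \<Longrightarrow> a \<in> {n+1,n+2} \<Longrightarrow> b \<in> {n+1,n+2} \<Longrightarrow> a \<noteq> b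
   \<Longrightarrow> X i a \<Longrightarrow> X j b \<Longrightarrow> D i j \<le> 3"
proof -
  assume as: "i \<in> {1..n}" "j \<in> {1..n}" "a \<in> {n+1,n+2}" "b \<in> {n+1,n+2}" "a \<noteq> b" "X i a" "X j b"
  have "D i j > 3 \<longrightarrow> (\<not> X i (n+1) \<or> \<not> X j (n+2)) \<and> (\<not> X i (n+2) \<or> \<not> X j (n+1))"
    using sat as(1,2) unfolding sat_phi2'_def by blast
  then show ?thesis using as(3-7) by auto
qed

abbreviation "E' \<equiv> ext_edge n D X"
abbreviation "one \<equiv> (\<lambda>_ _::nat. 1::nat)"

lemma edge1: "u \<in> {1..n} \<Longrightarrow> v \<in> {1..n} \<Longrightarrow> D u v = 1 \<Longrightarrow> \<exists>q\<in>W {1..n+2} E' u v. cst one q \<le> 1"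
  by (intro bexI[of _ "[u,v]"]) (auto simp: W_def ext_edge_def)

lemma sk2_edge:
  assumes "u \<in> {1..n}" "v \<in> {1..n}" "u \<noteq> v" "D u v \<le> 2"
  shows "\<exists>q\<in>W {1..n+2} E' u v. cst one q \<le> D u v"
proof -
  have "D u v > 0" using Dpos assms by blast
  then consider "D u v = 1" | "D u v = 2" using assms(4) by linarith
  then show ?thesis
  proof cases
    case 1
    then show ?thesis using edge1[OF assms(1,2) 1] by simp
  next
    case 2
    show ?thesis
    proof (cases "dG n D u v > 2")
      case True
      then obtain a where a: "a \<in> {n+1,n+2}" "X u a" "X v a"
        using sat assms 2 unfolding sat_phi2'_def by blast
      show ?thesis using assms a 2
        by (intro bexI[of _ "[u,a,v]"]) (auto simp: W_def ext_edge_def)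
    next
      case False
      hence "dG n D u v \<le> enat 2" by (simp add: not_less enat_numeral)
      then obtain p where p: "p \<in> W {1..n} (\<lambda>a b. D a b = 1) u v" "cst one p \<le> 2"
        unfolding dG_def using wd_ex by blast
      have "\<exists>q\<in>W {1..n+2} E' u v. cst one q \<le> cst one p"
        by (rule transfer[OF _ _ p(1)]) (use edge1 in auto)
      then show ?thesis using p(2) 2 by (metis order_trans)
    qed
  qed
qed

lemma sk3_edge:
  assumes "u \<in> {1..n}" "v \<in> {1..n}" "u \<noteq> v" "D u v \<le> 3"
  shows "\<exists>q\<in>W {1..n+2} E' u v. cst one q \<le> D u v"
proof (cases "D u v \<le> 2")
  case True then show ?thesis using sk2_edge assms by blast
next
  case F: False
  hence D3: "D u v = 3" using assms by linarith
  show ?thesis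
  proof (cases "skel_dist n D 2 u v > 3")
    case True
    have "D u v = 3 \<and> skel_dist n D 2 u v > 3 \<longrightarrow> (X u (n+1) \<and> X v (n+2)) \<or> (X u (n+2) \<and> X v (n+1))"
      using sat assms(1,2) unfolding sat_phi2'_def by blast
    hence "(X u (n+1) \<and> X v (n+2)) \<or> (X u (n+2) \<and> X v (n+1))" using True D3 by blast
    then obtain a b where a: "a \<in> {n+1,n+2}" "b \<in> {n+1,n+2}" "a \<noteq> b" "X u a" "X v b"
      by (metis insertI1 insertI2 n_not_Suc_n add_2_eq_Suc' Suc_eq_plus1)
    have e: "E' u a" "E' a b" "E' b v" using a assms(1,2) unfolding ext_edge_def by auto
    have "[u,a,b,v] \<in> W {1..n+2} E' u v" using e a assms(1,2) by (auto simp: W_def)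
    moreover have "cst one [u,a,b,v] \<le> D u v" using D3 by simp
    ultimately show ?thesis by blast
  next
    case False
    hence "skel_dist n D 2 u v \<le> enat 3" by (simp add: not_less enat_numeral)
    then obtain p where p: "p \<in> W {1..n} (\<lambda>a b. a \<noteq> b \<and> D a b \<le> 2) u v" "cst D p \<le> 3"
      unfolding skel_dist_def using wd_ex by blast
    have "\<exists>q\<in>W {1..n+2} E' u v. cst one q \<le> cst D p"
    proof (rule transfer[OF _ _ p(1)])
      fix u v assume "u \<in> {1..n}" "v \<in> {1..n}" "u \<noteq> v \<and> D u v \<le> 2"
      then show "\<exists>q\<in>W {1..n+2} E' u v. cst one q \<le> D u v" using sk2_edge by blast
    qed auto
    then show ?thesis using p(2) D3 by (metis order_trans)
  qed
qed

lemma dirA: assumes "p \<in> W {1..n} (\<lambda>a b. a \<noteq> b \<and> D a b \<le> 3) i j"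
  shows "\<exists>q\<in>W {1..n+2} E' i j. cst one q \<le> cst D p"
proof (rule transfer[OF _ _ assms])
  fix u v assume "u \<in> {1..n}" "v \<in> {1..n}" "u \<noteq> v \<and> D u v \<le> 3"
  then show "\<exists>q\<in>W {1..n+2} E' u v. cst one q \<le> D u v" using sk3_edge by blast
qed auto

abbreviation "Es \<equiv> (\<lambda>a b. a \<noteq> b \<and> D a b \<le> 3)"

lemma prep: assumes "q \<in> W {1..n} Es w j" "u \<in> {1..n}" "u = w \<or> D u w \<le> 3"
  shows "\<exists>q'\<in>W {1..n} Es u j. cst D q' \<le> D u w + cst D q"
proof (cases "u = w")
  case True then show ?thesis using assms(1) by (intro bexI[of _ q]) auto
next
  case False
  obtain r where q: "q = w # r" using assms(1) iw_ne unfolding W_def by (cases q) auto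
  have qq: "hd q = w" "last q = j" "set q \<subseteq> {1..n}" "iw Es q" using assms(1) unfolding W_def by auto
  have d: "D u w \<le> 3" using assms(3) False by blast
  have i0: "iw Es (w#r)" using qq(4) unfolding q .
  have i: "iw Es (u#w#r)" using i0 False d by (simp only: iw.simps) blast
  have l: "last (u#w#r) = j" using q qq(2) by simp
  have s: "set (u#w#r) \<subseteq> {1..n}" using q qq(3) assms(2) by simp
  have "u # w # r \<in> W {1..n} Es u j" unfolding W_def
  proof (intro CollectI conjI)
    show "hd (u # w # r) = u" by (rule list.sel(1))
  qed (fact l s i)+
  moreover have "cst D (u # w # r) = D u w + cst D q" using q by simp
  ultimately show ?thesis unfolding q by (intro bexI[of _ "u#w#r"]) simp_all
qed

lemma newv: "y \<in> {1..n+2} \<Longrightarrow> y \<notin> {1..n} \<Longrightarrow> y = n+1 \<or> y = n+2" by auto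

lemma dirB:
  assumes j: "j \<in> {1..n}"
  shows "iw E' p \<Longrightarrow> set p \<subseteq> {1..n+2} \<Longrightarrow> last p = j \<Longrightarrow>
   (hd p \<in> {1..n} \<longrightarrow> (\<exists>q\<in>W {1..n} Es (hd p) j. cst D q \<le> cst one p)) \<and>
   (hd p \<notin> {1..n} \<longrightarrow> (\<exists>w a q. w \<in> {1..n} \<and> a \<in> {n+1,n+2} \<and> X w a \<and> q \<in> W {1..n} Es w j \<and>
        cst D q + 1 + (if a = hd p then 0 else 1) \<le> cst one p))"
proof (induction p)
  case Nil then show ?case by simp
next
  case (Cons x p)
  show ?case
  proof (cases "p = []")
    case True
    then have xj: "x = j" using Cons.prems by simp
    have "[j] \<in> W {1..n} Es j j" using j by (rule W_single)
    moreover have "hd (x#p) = j" "cst D [j] = 0" using xj True by simp_all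
    ultimately show ?thesis using j by (intro conjI impI) (auto intro!: bexI[of _ "[j]"])
  next
    case False
    obtain y r where pr: "p = y # r" using False by (cases p) auto
    have E: "E' x y" and ip: "iw E' p" using Cons.prems(1) pr by auto
    have sp: "set p \<subseteq> {1..n+2}" using Cons.prems(2) by auto
    have lp: "last p = j" using Cons.prems(3) False by simp
    have xV: "x \<in> {1..n+2}" using Cons.prems(2) by auto
    have yV: "y \<in> {1..n+2}" using sp pr by auto
    have IH: "(y \<in> {1..n} \<longrightarrow> (\<exists>q\<in>W {1..n} Es y j. cst D q \<le> cst one p)) \<and>
      (y \<notin> {1..n} \<longrightarrow> (\<exists>w a q. w \<in> {1..n} \<and> a \<in> {n+1,n+2} \<and> X w a \<and> q \<in> W {1..n} Es w j \<and>
        cst D q + 1 + (if a = y then 0 else 1) \<le> cst one p))"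
      using Cons.IH[OF ip sp lp] pr by simp
    have cc: "cst one (x#p) = 1 + cst one p" using pr by simp
    consider (a) "x \<in> {1..n}" "y \<in> {1..n}" | (b) "x \<in> {1..n}" "y \<notin> {1..n}"
      | (c) "x \<notin> {1..n}" "y \<notin> {1..n}" | (d) "x \<notin> {1..n}" "y \<in> {1..n}" by blast
    then show ?thesis
    proof cases
      case a
      have D1: "D x y = 1" using E a unfolding ext_edge_def by auto
      obtain q where q: "q \<in> W {1..n} Es y j" "cst D q \<le> cst one p" using IH a by blast
      obtain q' where q': "q' \<in> W {1..n} Es x j" "cst D q' \<le> D x y + cst D q"
        using prep[OF q(1) a(1)] D1 by auto
      have "cst D q' \<le> cst one (x#p)" using q'(2) q(2) cc D1 by linarith
      then show ?thesis using q'(1) a by auto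
    next
      case b
      have Xxy: "X x y" using E b unfolding ext_edge_def by auto
      have yN: "y \<in> {n+1,n+2}" using newv[OF yV b(2)] by auto
      obtain w a q where wa: "w \<in> {1..n}" "a \<in> {n+1,n+2}" "X w a" "q \<in> W {1..n} Es w j"
        "cst D q + 1 + (if a = y then 0 else 1) \<le> cst one p" using IH b by blast
      have "\<exists>q'\<in>W {1..n} Es x j. cst D q' \<le> cst one (x#p)"
      proof (cases "a = y")
        case True
        have "D x w \<le> 2" using S1[OF b(1) wa(1) wa(2)] Xxy wa(3) True by blast
        then obtain q' where q': "q' \<in> W {1..n} Es x j" "cst D q' \<le> D x w + cst D q"
          using prep[OF wa(4) b(1)] by fastforce
        have "cst D q' \<le> cst one (x#p)" using q'(2) wa(5) True cc \<open>D x w \<le> 2\<close> by simp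
        then show ?thesis using q'(1) by blast
      next
        case False
        have "D x w \<le> 3" using S3[OF b(1) wa(1) yN wa(2)] False Xxy wa(3) by metis
        then obtain q' where q': "q' \<in> W {1..n} Es x j" "cst D q' \<le> D x w + cst D q"
          using prep[OF wa(4) b(1)] by fastforce
        have "cst D q' \<le> cst one (x#p)" using q'(2) wa(5) False cc \<open>D x w \<le> 3\<close> by simp
        then show ?thesis using q'(1) by blast
      qed
      then show ?thesis using b by simp
    next
      case c
      have xy: "x \<noteq> y" using E c unfolding ext_edge_def by auto
      have xN: "x = n+1 \<or> x = n+2" using newv[OF xV c(1)] .
      have yN: "y = n+1 \<or> y = n+2" using newv[OF yV c(2)] .
      obtain w a q where wa: "w \<in> {1..n}" "a \<in> {n+1,n+2}" "X w a" "q \<in> W {1..n} Es w j"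
        "cst D q + 1 + (if a = y then 0 else 1) \<le> cst one p" using IH c by blast
      have ineq: "cst D q + 1 + (if a = x then 0 else 1) \<le> cst one (x#p)"
      proof (cases "a = x")
        case True then show ?thesis using wa(5) xy cc by simp
      next
        case False
        then have "a = y" using xN yN wa(2) xy by auto
        then show ?thesis using wa(5) False cc by simp
      qed
      have "\<exists>w a q. w \<in> {1..n} \<and> a \<in> {n+1,n+2} \<and> X w a \<and> q \<in> W {1..n} Es w j \<and>
        cst D q + 1 + (if a = hd (x#p) then 0 else 1) \<le> cst one (x#p)"
        using wa(1-4) ineq by (intro exI[of _ w] exI[of _ a] exI[of _ q]) simp
      then show ?thesis using c(1) by (simp only: list.sel(1)) blast
    next
      case d
      have Xyx: "X y x" using E d unfolding ext_edge_def by auto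
      have xN: "x \<in> {n+1,n+2}" using newv[OF xV d(1)] by auto
      obtain q where q: "q \<in> W {1..n} Es y j" "cst D q \<le> cst one p" using IH d by blast
      have ineq: "cst D q + 1 + (if x = hd (x#p) then 0 else 1) \<le> cst one (x#p)" using q(2) cc by simp
      have "\<exists>w a q. w \<in> {1..n} \<and> a \<in> {n+1,n+2} \<and> X w a \<and> q \<in> W {1..n} Es w j \<and>
        cst D q + 1 + (if a = hd (x#p) then 0 else 1) \<le> cst one (x#p)"
        using d(2) xN Xyx q(1) ineq by (intro exI[of _ y] exI[of _ x] exI[of _ q]) simp
      then show ?thesis using d(1) by (simp only: list.sel(1)) blast
    qed
  qed
qed

theorem main_aux:
  assumes i: "i \<in> {1..n}" and j: "j \<in> {1..n}"
  shows "ext_dist n D X i j = skel_dist n D 3 i j"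
proof (rule antisym)
  show "ext_dist n D X i j \<le> skel_dist n D 3 i j"
    unfolding ext_dist_def skel_dist_def wdist_alt
  proof (rule INF_mono)
    fix q assume "q \<in> W {1..n} (\<lambda>a b. a \<noteq> b \<and> D a b \<le> 3) i j"
    then obtain p where p: "p \<in> W {1..n+2} E' i j" "cst one p \<le> cst D q" using dirA by blast
    have "enat (cst one p) \<le> enat (cst D q)" using p(2) by simp
    then show "\<exists>p\<in>W {1..n+2} E' i j. enat (cst one p) \<le> enat (cst D q)" using p(1) by (rule bexI)
  qed
next
  show "skel_dist n D 3 i j \<le> ext_dist n D X i j"
    unfolding ext_dist_def skel_dist_def wdist_alt
  proof (rule INF_mono)
    fix p assume p: "p \<in> W {1..n+2} E' i j"
    have h: "hd p = i" "last p = j" "set p \<subseteq> {1..n+2}" "iw E' p" using p unfolding W_def by blast+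
    have "hd p \<in> {1..n} \<longrightarrow> (\<exists>q\<in>W {1..n} Es (hd p) j. cst D q \<le> cst one p)"
      using dirB[OF j h(4) h(3) h(2)] by (rule conjunct1)
    hence "\<exists>q\<in>W {1..n} Es i j. cst D q \<le> cst one p" using h(1) i by simp
    then obtain q where q: "q \<in> W {1..n} Es i j" "cst D q \<le> cst one p" by blast
    have "enat (cst D q) \<le> enat (cst one p)" using q(2) by simp
    then show "\<exists>q\<in>W {1..n} (\<lambda>a b. a \<noteq> b \<and> D a b \<le> 3) i j. enat (cst D q) \<le> enat (cst one p)"
      using q(1) by (rule bexI)
  qed
qed

end

theorem mainTheorem16:
  fixes n :: nat and D :: "nat \<Rightarrow> nat \<Rightarrow> nat" and X :: "nat \<Rightarrow> nat \<Rightarrow> bool"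
  assumes "is_distance_matrix n D"
    and "sat_phi2' n D X"
  shows "\<forall>i\<in>{1..n}. \<forall>j\<in>{1..n}. ext_dist n D X i j = skel_dist n D 3 i j"
  using main_aux[OF assms] by blast

end
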